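(* Let $S$ be a $\Gamma$-AG$^{**}$-groupoid. Then $S$ is intra-regular if and only if every left $\Gamma$-ideal $L$ of $S$ is $\Gamma$-idempotent, i.e. $L\Gamma L=L$.
   Context: Let $S$ and $\Gamma$ be nonempty sets with a map $S\times\Gamma\times S\to S$, $(x,\gamma,y)\mapsto x\gamma y$. $S$ is a $\Gamma$-AG-groupoid if $(x\gamma y)\delta z=(z\gamma y)\delta x$ for all $x,y,z\in S$, $\gamma,\delta\in\Gamma$; it is a $\Gamma$-AG$^{**}$-groupoid if moreover $a\alpha(b\beta c)=b\alpha(a\beta c)$ for all $a,b,c\in S$, $\alpha,\beta\in\Gamma$. For subsets $A,B\subseteq S$, $A\Gamma B=\{a\gamma b: a\in A,\gamma\in\Gamma,b\in B\}$. $S$ is intra-regular if for every $a\in S$ there exist $x,y\in S$ and $\beta,\gamma,\delta\in\Gamma$ with $a=(x\beta(a\delta a))\gamma y$. A nonempty subset $L$ is a left $\Gamma$-ideal if $S\Gamma L\subseteq L$. *)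

theory Defs
  imports Main
begin

text \<open>A Gamma-groupoid: the carrier S is the type 'a, Gamma is the type 'g
  (types are nonempty), with ternary operation m x gamma y = x gamma y.\<close>

definition Gamma_AG_groupoid :: "('a \<Rightarrow> 'g \<Rightarrow> 'a \<Rightarrow> 'a) \<Rightarrow> bool" where
  "Gamma_AG_groupoid m \<longleftrightarrow>
     (\<forall>x y z \<gamma> \<delta>. m (m x \<gamma> y) \<delta> z = m (m z \<gamma> y) \<delta> x)"

definition Gamma_AG2_groupoid :: "('a \<Rightarrow> 'g \<Rightarrow> 'a \<Rightarrow> 'a) \<Rightarrow> bool" where
  "Gamma_AG2_groupoid m \<longleftrightarrow> Gamma_AG_groupoid m \<and>
     (\<forall>a b c \<alpha> \<beta>. m a \<alpha> (m b \<beta> c) = m b \<alpha> (m a \<beta> c))"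

definition GammaProd :: "('a \<Rightarrow> 'g \<Rightarrow> 'a \<Rightarrow> 'a) \<Rightarrow> 'a set \<Rightarrow> 'a set \<Rightarrow> 'a set" where
  "GammaProd m A B = {m a \<gamma> b | a \<gamma> b. a \<in> A \<and> b \<in> B}"

definition intra_regular :: "('a \<Rightarrow> 'g \<Rightarrow> 'a \<Rightarrow> 'a) \<Rightarrow> bool" where
  "intra_regular m \<longleftrightarrow>
     (\<forall>a. \<exists>x y \<beta> \<gamma> \<delta>. a = m (m x \<beta> (m a \<delta> a)) \<gamma> y)"

definition left_Gamma_ideal :: "('a \<Rightarrow> 'g \<Rightarrow> 'a \<Rightarrow> 'a) \<Rightarrow> 'a set \<Rightarrow> bool" where
  "left_Gamma_ideal m L \<longleftrightarrow> L \<noteq> {} \<and> GammaProd m UNIV L \<subseteq> L"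

end

theory Submission
  imports Defs
begin

lemma case_z:
  assumes LI: "\<And>x g y d z. m (m x g y) d z = m (m z g y) d x"
    and AG: "\<And>a al b be c. m a al (m b be c) = m b al (m a be c)"
    and h: "a = m z g (m a e a)"
  shows "\<exists>x y \<beta> \<gamma> \<delta>. a = m (m x \<beta> (m a \<delta> a)) \<gamma> y"
proof -
  from h have 1: "m a e a = m (m z g (m a e a)) e a" by (rule arg_cong[where f="\<lambda>u. m u e a"])
  have 2: "m (m z g (m a e a)) e a = m (m a g (m a e a)) e z" by (rule LI)
  have 3: "m a e a = m (m a g (m a e a)) e z" using 1 2 by (rule trans)
  have "a = m z g (m a e a)" by (rule h)
  also have "\<dots> = m z g (m (m a g (m a e a)) e z)" by (rule arg_cong[where f="m z g", OF 3])
  also have "\<dots> = m (m a g (m a e a)) g (m z e z)" by (rule AG)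
  finally show ?thesis by blast
qed

theorem mainTheorem12:
  fixes m :: "'a \<Rightarrow> 'g \<Rightarrow> 'a \<Rightarrow> 'a"
  assumes "Gamma_AG2_groupoid m"
  shows "intra_regular m \<longleftrightarrow>
           (\<forall>L. left_Gamma_ideal m L \<longrightarrow> GammaProd m L L = L)"
proof -
  have LI: "\<And>x g y d z. m (m x g y) d z = m (m z g y) d x"
    using assms unfolding Gamma_AG2_groupoid_def Gamma_AG_groupoid_def by blast
  have AG: "\<And>a al b be c. m a al (m b be c) = m b al (m a be c)"
    using assms unfolding Gamma_AG2_groupoid_def by blast
  show ?thesis
  proof
    assume ir: "intra_regular m"
    show "\<forall>L. left_Gamma_ideal m L \<longrightarrow> GammaProd m L L = L"
    proof (intro allI impI)
      fix L assume L: "left_Gamma_ideal m L"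
      hence cl: "\<And>s g l. l \<in> L \<Longrightarrow> m s g l \<in> L"
        unfolding left_Gamma_ideal_def GammaProd_def by blast
      show "GammaProd m L L = L"
      proof
        show "GammaProd m L L \<subseteq> L" using cl unfolding GammaProd_def by blast
        show "L \<subseteq> GammaProd m L L"
        proof
          fix a assume a: "a \<in> L"
          obtain x y b c d where e: "a = m (m x b (m a d a)) c y"
            using ir unfolding intra_regular_def by blast
          have "a = m (m x b (m a d a)) c y" by (rule e)
          also have "\<dots> = m (m y b (m a d a)) c x" by (rule LI)
          also have "\<dots> = m (m a b (m y d a)) c x" by (simp only: AG[of y b a d a])
          also have "\<dots> = m (m x b (m y d a)) c a" by (rule LI)
          finally have "a = m (m x b (m y d a)) c a" .
          moreover have "m x b (m y d a) \<in> L" using cl a by blast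
          ultimately show "a \<in> GammaProd m L L" using a unfolding GammaProd_def by blast
        qed
      qed
    qed
  next
    assume idem: "\<forall>L. left_Gamma_ideal m L \<longrightarrow> GammaProd m L L = L"
    have "left_Gamma_ideal m UNIV" unfolding left_Gamma_ideal_def by simp
    hence "GammaProd m UNIV UNIV = UNIV" using idem by blast
    hence SS: "\<And>s. \<exists>u g v. s = m u g v" unfolding GammaProd_def by blast
    show "intra_regular m"
      unfolding intra_regular_def
    proof
      fix a
      define L where "L = insert a (GammaProd m UNIV {a})"
      have clos: "\<And>s d l. l \<in> L \<Longrightarrow> m s d l \<in> L"
      proof -
        fix s d l assume "l \<in> L"
        then consider "l = a" | t e where "l = m t e a" unfolding L_def GammaProd_def by blast
        thus "m s d l \<in> L"
        proof cases
          case 1 thus ?thesis unfolding L_def GammaProd_def by blast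
        next
          case 2
          obtain u g v where t: "t = m u g v" using SS by blast
          have "m s d l = m s d (m (m a g v) e u)" unfolding 2 t by (simp only: LI[of u g v e a])
          also have "\<dots> = m (m a g v) d (m s e u)" by (rule AG)
          also have "\<dots> = m (m (m s e u) g v) d a" by (rule LI)
          finally show ?thesis unfolding L_def GammaProd_def by blast
        qed
      qed
      have "left_Gamma_ideal m L" unfolding left_Gamma_ideal_def GammaProd_def
        using clos L_def by blast
      hence "GammaProd m L L = L" using idem by blast
      moreover have "a \<in> L" unfolding L_def by blast
      ultimately obtain p g q where pq: "a = m p g q" "p \<in> L" "q \<in> L"
        unfolding GammaProd_def by blast
      have pc: "p = a \<or> (\<exists>s e. p = m s e a)" using pq(2) unfolding L_def GammaProd_def by blast
      have qc: "q = a \<or> (\<exists>s e. q = m s e a)" using pq(3) unfolding L_def GammaProd_def by blast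
      show "\<exists>x y \<beta> \<gamma> \<delta>. a = m (m x \<beta> (m a \<delta> a)) \<gamma> y"
      proof (cases "p = a")
        case pa: True
        show ?thesis
        proof (cases "q = a")
          case True
          have aa: "m a g a = a" using pq(1) unfolding pa True by (rule sym)
          have "a = m (m a g (m a g a)) g a" using aa by simp
          thus ?thesis by blast
        next
          case False
          then obtain t e where q: "q = m t e a" using qc by blast
          have "a = m a g (m t e a)" using pq(1) unfolding pa q .
          also have "\<dots> = m t g (m a e a)" by (rule AG)
          finally show ?thesis by (rule case_z[OF LI AG])
        qed
      next
        case False
        then obtain s e where p: "p = m s e a" using pc by blast
        show ?thesis
        proof (cases "q = a")
          case True
          have h: "a = m (m s e a) g a" using pq(1) unfolding p True .
          also have "\<dots> = m (m a e a) g s" by (rule LI)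
          finally have h2: "a = m (m a e a) g s" .
          from h2 have 1: "m a e a = m (m (m a e a) g s) e a"
            by (rule arg_cong[where f="\<lambda>u. m u e a"])
          have 2: "m (m (m a e a) g s) e a = m (m a g s) e (m a e a)" by (rule LI)
          have 3: "m a e a = m (m a g s) e (m a e a)" using 1 2 by (rule trans)
          have "a = m (m a e a) g s" by (rule h2)
          also have "\<dots> = m (m (m a g s) e (m a e a)) g s" by (rule arg_cong[where f="\<lambda>u. m u g s", OF 3])
          finally have "a = m (m (m a g s) e (m a e a)) g s" .
          thus ?thesis by blast
        next
          case False
          then obtain t d where q: "q = m t d a" using qc by blast
          have "a = m (m s e a) g (m t d a)" using pq(1) unfolding p q .
          also have "\<dots> = m (m (m t d a) e a) g s" by (rule LI)
          also have "\<dots> = m (m (m a d a) e t) g s" by (simp only: LI[of t d a e a])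
          also have "\<dots> = m (m s e t) g (m a d a)" by (rule LI)
          finally show ?thesis by (rule case_z[OF LI AG])
        qed
      qed
    qed
  qed
qed

end
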